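(* Let $T$ be a tree and let $D\subseteq L(T)$ be a set of legs of $T$ with an even number of elements. Then there exists a unique cycle $C$ in $T$ whose set of legs is $D$.
   Context: A graph $T$ is a finite set $X(T)$ with idempotent root map $r$ and involution $\iota$ fixing $r(X(T))$ pointwise; vertices are $r(X(T))$, half-edges the rest, edges the size-2 $\iota$-orbits of half-edges, legs the $\iota$-fixed half-edges. A tree is a connected weighted graph of genus $0$ (so $\#E-\#V+1=0$ and all vertex weights are $0$). A subgraph is a subset of $X(T)$ preserved by $r$ and $\iota$, with weights restricted. For a subgraph $C$ and $v\in V(C)$, $\mathrm{val}_C(v)$ is the number of half-edges of $C$ rooted at $v$. A cycle in $T$ is a subgraph $C$ such that every vertex $v$ of $C$ satisfies $2-2g(v)-\mathrm{val}_C(v)\leq0$ and $\mathrm{val}_C(v)$ is even. The legs of $C$ are the legs of $T$ lying in $C$. *)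

theory Defs
  imports Main
begin

definition is_graph :: "'a set \<Rightarrow> ('a \<Rightarrow> 'a) \<Rightarrow> ('a \<Rightarrow> 'a) \<Rightarrow> bool" where
  "is_graph X r i \<longleftrightarrow> finite X \<and> r ` X \<subseteq> X \<and> i ` X \<subseteq> X
     \<and> (\<forall>x\<in>X. r (r x) = r x) \<and> (\<forall>x\<in>X. i (i x) = x) \<and> (\<forall>x\<in>X. i (r x) = r x)"

definition vertices :: "'a set \<Rightarrow> ('a \<Rightarrow> 'a) \<Rightarrow> 'a set" where
  "vertices X r = r ` X"

definition half_edges :: "'a set \<Rightarrow> ('a \<Rightarrow> 'a) \<Rightarrow> 'a set" where
  "half_edges X r = X - r ` X"

definition graph_edges :: "'a set \<Rightarrow> ('a \<Rightarrow> 'a) \<Rightarrow> ('a \<Rightarrow> 'a) \<Rightarrow> 'a set set" where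
  "graph_edges X r i = {{h, i h} | h. h \<in> half_edges X r \<and> i h \<noteq> h}"

definition graph_legs :: "'a set \<Rightarrow> ('a \<Rightarrow> 'a) \<Rightarrow> ('a \<Rightarrow> 'a) \<Rightarrow> 'a set" where
  "graph_legs X r i = {h \<in> half_edges X r. i h = h}"

definition adjacency :: "'a set \<Rightarrow> ('a \<Rightarrow> 'a) \<Rightarrow> ('a \<Rightarrow> 'a) \<Rightarrow> ('a \<times> 'a) set" where
  "adjacency X r i = {(r h, r (i h)) | h. h \<in> half_edges X r \<and> i h \<noteq> h}"

definition graph_connected :: "'a set \<Rightarrow> ('a \<Rightarrow> 'a) \<Rightarrow> ('a \<Rightarrow> 'a) \<Rightarrow> bool" where
  "graph_connected X r i \<longleftrightarrow> vertices X r \<noteq> {} \<and>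
     (\<forall>v\<in>vertices X r. \<forall>w\<in>vertices X r. (v, w) \<in> (adjacency X r i)\<^sup>*)"

text \<open>A tree: connected weighted graph of genus 0, i.e. #E - #V + 1 = 0 and all weights 0.\<close>
definition is_tree :: "'a set \<Rightarrow> ('a \<Rightarrow> 'a) \<Rightarrow> ('a \<Rightarrow> 'a) \<Rightarrow> ('a \<Rightarrow> nat) \<Rightarrow> bool" where
  "is_tree X r i g \<longleftrightarrow> is_graph X r i \<and> graph_connected X r i
     \<and> int (card (graph_edges X r i)) - int (card (vertices X r)) + 1 = 0
     \<and> (\<forall>v\<in>vertices X r. g v = 0)"

definition is_subgraph :: "'a set \<Rightarrow> ('a \<Rightarrow> 'a) \<Rightarrow> ('a \<Rightarrow> 'a) \<Rightarrow> 'a set \<Rightarrow> bool" where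
  "is_subgraph X r i C \<longleftrightarrow> C \<subseteq> X \<and> r ` C \<subseteq> C \<and> i ` C \<subseteq> C"

definition val :: "'a set \<Rightarrow> ('a \<Rightarrow> 'a) \<Rightarrow> 'a \<Rightarrow> nat" where
  "val C r v = card {h \<in> half_edges C r. r h = v}"

definition is_cycle :: "'a set \<Rightarrow> ('a \<Rightarrow> 'a) \<Rightarrow> ('a \<Rightarrow> 'a) \<Rightarrow> ('a \<Rightarrow> nat) \<Rightarrow> 'a set \<Rightarrow> bool" where
  "is_cycle X r i g C \<longleftrightarrow> is_subgraph X r i C \<and>
     (\<forall>v\<in>vertices C r. 2 - 2 * int (g v) - int (val C r v) \<le> 0 \<and> even (val C r v))"

definition cycle_legs :: "'a set \<Rightarrow> ('a \<Rightarrow> 'a) \<Rightarrow> ('a \<Rightarrow> 'a) \<Rightarrow> 'a set \<Rightarrow> 'a set" where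
  "cycle_legs X r i C = graph_legs X r i \<inter> C"

end

theory Submission imports Defs begin

definition pset where "pset X r i S \<longleftrightarrow> S \<subseteq> half_edges X r \<and> (\<forall>h\<in>S. i h \<in> S)"
definition par where "par r S x \<longleftrightarrow> odd (card {h\<in>S. r h = x})"
definition sd where "sd A B = (A - B) \<union> (B - A)"

lemma card_sd: "finite A \<Longrightarrow> finite B \<Longrightarrow> card (sd A B) + 2 * card (A \<inter> B) = card A + card B"
proof -
  assume f: "finite A" "finite B"
  have "A \<union> B = sd A B \<union> (A \<inter> B)" "sd A B \<inter> (A \<inter> B) = {}" unfolding sd_def by auto
  hence "card (A \<union> B) = card (sd A B) + card (A \<inter> B)"
    using f by (metis card_Un_disjoint finite_Int finite_UnI sd_def finite_Diff)
  moreover have "card A + card B = card (A \<union> B) + card (A \<inter> B)" using f card_Un_Int by blast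
  ultimately show ?thesis by simp
qed

lemma par_sd: "finite A \<Longrightarrow> finite B \<Longrightarrow> par r (sd A B) x \<longleftrightarrow> (par r A x \<noteq> par r B x)"
proof -
  assume f: "finite A" "finite B"
  have e: "{h\<in>sd A B. r h = x} = sd {h\<in>A. r h = x} {h\<in>B. r h = x}" unfolding sd_def by auto
  have "card (sd {h\<in>A. r h = x} {h\<in>B. r h = x}) + 2 * card ({h\<in>A. r h = x} \<inter> {h\<in>B. r h = x})
     = card {h\<in>A. r h = x} + card {h\<in>B. r h = x}" using f by (intro card_sd) auto
  then show ?thesis unfolding par_def e by presburger
qed

definition dst :: "('a \<times> 'a) set \<Rightarrow> 'a \<Rightarrow> 'a \<Rightarrow> nat" where
  "dst A \<rho> v = (LEAST n. (\<rho>, v) \<in> A ^^ n)"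

lemma dst_le: "(\<rho>, v) \<in> A ^^ n \<Longrightarrow> dst A \<rho> v \<le> n"
  unfolding dst_def by (rule Least_le)
lemma dst_in: "(\<rho>, v) \<in> A ^^ n \<Longrightarrow> (\<rho>, v) \<in> A ^^ (dst A \<rho> v)"
  unfolding dst_def by (rule LeastI)
lemma dst_step: "(\<rho>, u) \<in> A ^^ n \<Longrightarrow> (u, v) \<in> A \<Longrightarrow> dst A \<rho> v \<le> Suc (dst A \<rho> u)"
proof -
  assume a: "(\<rho>, u) \<in> A ^^ n" "(u, v) \<in> A"
  have "(\<rho>, v) \<in> A ^^ Suc (dst A \<rho> u)" using relpow_Suc_I[OF dst_in[OF a(1)] a(2)] .
  thus ?thesis by (rule dst_le)
qed
lemma dst_pred:
  assumes "(\<rho>, v) \<in> A ^^ n" "v \<noteq> \<rho>"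
  shows "\<exists>u m. (\<rho>, u) \<in> A ^^ m \<and> (u, v) \<in> A \<and> dst A \<rho> v = Suc (dst A \<rho> u)"
proof -
  have k: "(\<rho>, v) \<in> A ^^ (dst A \<rho> v)" using dst_in[OF assms(1)] .
  have "dst A \<rho> v \<noteq> 0" using k assms(2) by (metis relpow_0_E)
  then obtain m where m: "dst A \<rho> v = Suc m" by (metis not0_implies_Suc)
  then obtain u where u: "(\<rho>, u) \<in> A ^^ m" "(u, v) \<in> A" using k by (metis relpow_Suc_E)
  have "dst A \<rho> u \<le> m" using dst_le[OF u(1)] .
  moreover have "dst A \<rho> v \<le> Suc (dst A \<rho> u)" using dst_step[OF u] .
  ultimately show ?thesis using u m by (intro exI[of _ u] exI[of _ m]) auto
qed

definition upe where "upe X r i d v e \<longleftrightarrow> (\<exists>k. e = {k, i k} \<and> k \<in> half_edges X r \<and> i k \<noteq> k \<and> r k = v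
   \<and> Suc (d (r (i k))) = (d v :: nat))"

context fixes X :: "'a set" and r i :: "'a \<Rightarrow> 'a" assumes G: "is_graph X r i" begin

lemma fin: "finite X" using G unfolding is_graph_def by auto
lemma rX: "x \<in> X \<Longrightarrow> r x \<in> X" using G unfolding is_graph_def by auto
lemma iX: "x \<in> X \<Longrightarrow> i x \<in> X" using G unfolding is_graph_def by auto
lemma rr: "x \<in> X \<Longrightarrow> r (r x) = r x" using G unfolding is_graph_def by auto
lemma ii: "x \<in> X \<Longrightarrow> i (i x) = x" using G unfolding is_graph_def by auto
lemma ir: "x \<in> X \<Longrightarrow> i (r x) = r x" using G unfolding is_graph_def by auto
lemma HX: "half_edges X r \<subseteq> X" unfolding half_edges_def by auto
lemma he_i: "h \<in> half_edges X r \<Longrightarrow> i h \<in> half_edges X r"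
proof -
  assume h: "h \<in> half_edges X r"
  hence hX: "h \<in> X" "h \<notin> r ` X" unfolding half_edges_def by auto
  have "i h \<notin> r ` X"
  proof
    assume "i h \<in> r ` X" then obtain x where "x \<in> X" "i h = r x" by auto
    hence "h = r x" using ii[OF hX(1)] ir[OF \<open>x \<in> X\<close>] by simp
    thus False using hX \<open>x \<in> X\<close> by auto
  qed
  thus ?thesis using iX hX unfolding half_edges_def by auto
qed
lemma legs_he: "graph_legs X r i \<subseteq> half_edges X r" unfolding graph_legs_def by auto

lemma pset_fin: "pset X r i S \<Longrightarrow> finite S"
proof -
  assume "pset X r i S" hence "S \<subseteq> X" using HX unfolding pset_def by blast
  thus ?thesis by (rule finite_subset[OF _ fin])
qed

lemma pset_sd: "pset X r i A \<Longrightarrow> pset X r i B \<Longrightarrow> pset X r i (sd A B)"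
proof -
  assume a: "pset X r i A" "pset X r i B"
  have "i h \<in> sd A B" if "h \<in> sd A B" for h
  proof -
    have hX: "h \<in> X" using that a HX unfolding pset_def sd_def by blast
    show ?thesis using that a ii[OF hX] unfolding pset_def sd_def by (metis DiffE DiffI UnE UnI1 UnI2)
  qed
  thus ?thesis using a unfolding pset_def sd_def by blast
qed

lemma walk:
  assumes "(v, w) \<in> (adjacency X r i)\<^sup>*"
  shows "\<exists>S. pset X r i S \<and> (\<forall>h\<in>S. i h \<noteq> h) \<and> (\<forall>x. par r S x \<longleftrightarrow> (x = v) \<noteq> (x = w))"
  using assms
proof (induction rule: rtrancl_induct)
  case base
  show ?case by (rule exI[of _ "{}"]) (simp add: pset_def par_def)
next
  case (step w z)
  obtain S where S: "pset X r i S" "\<forall>h\<in>S. i h \<noteq> h" "\<forall>x. par r S x \<longleftrightarrow> (x = v) \<noteq> (x = w)" using step.IH by metis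
  from step(2) obtain h where h: "w = r h" "z = r (i h)" "h \<in> half_edges X r" "i h \<noteq> h"
    unfolding adjacency_def by auto
  have hX: "h \<in> X" using h HX by auto
  let ?e = "{h, i h}"
  have pe: "pset X r i ?e" unfolding pset_def using h he_i ii[OF hX] by auto
  have ne: "\<forall>k\<in>?e. i k \<noteq> k" using h ii[OF hX] by auto
  have pare: "par r ?e x \<longleftrightarrow> (x = w) \<noteq> (x = z)" for x
  proof -
    have "{k\<in>?e. r k = x} = (if r h = x then {h} else {}) \<union> (if r (i h) = x then {i h} else {})" by auto
    thus ?thesis using h(4) unfolding par_def h(1,2) by auto
  qed
  show ?case
  proof (intro exI conjI)
    show "pset X r i (sd S ?e)" using pset_sd S pe by blast
    show "\<forall>k\<in>sd S ?e. i k \<noteq> k" using S(2) ne unfolding sd_def by blast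
    show "\<forall>x. par r (sd S ?e) x = ((x = v) \<noteq> (x = z))"
    proof
      fix x
      show "par r (sd S ?e) x = ((x = v) \<noteq> (x = z))"
        unfolding par_sd[OF pset_fin[OF S(1)] pset_fin[OF pe]] S(3)[rule_format] pare by auto
    qed
  qed
qed


lemma legs_i: "h \<in> graph_legs X r i \<Longrightarrow> i h = h" unfolding graph_legs_def by auto

lemma exist:
  assumes conn: "graph_connected X r i"
  shows "D \<subseteq> graph_legs X r i \<Longrightarrow> even (card D) \<Longrightarrow>
     \<exists>H. pset X r i H \<and> (\<forall>x. \<not> par r H x) \<and> H \<inter> graph_legs X r i = D"
proof (induction "card D" arbitrary: D rule: less_induct)
  case less
  have "D \<subseteq> X" using less.prems legs_he HX by blast
  hence fD: "finite D" using finite_subset fin by blast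
  show ?case
  proof (cases "D = {}")
    case True
    show ?thesis by (rule exI[of _ "{}"]) (simp add: pset_def par_def True)
  next
    case False
    then obtain a where a: "a \<in> D" by auto
    have "card D \<noteq> 0" using a fD by auto
    hence c2: "card D \<ge> 2" using less.prems(2) by presburger
    have "card (D - {a}) \<noteq> 0" using c2 a fD by (simp add: card_Diff_singleton)
    then obtain b where b: "b \<in> D" "b \<noteq> a" using fD
      by (metis Diff_iff card.empty equals0I insertCI)
    let ?D = "D - {a, b}"
    have cD: "card ?D = card D - 2" using a b fD by (simp add: card_Diff_subset)
    obtain H' where H': "pset X r i H'" "\<forall>x. \<not> par r H' x" "H' \<inter> graph_legs X r i = ?D"
      using less.hyps[of ?D] less.prems cD c2 by auto
    have aL: "a \<in> graph_legs X r i" and bL: "b \<in> graph_legs X r i" using a b less.prems by auto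
    have ax: "a \<in> X" "b \<in> X" using aL bL legs_he HX by auto
    have "(r a, r b) \<in> (adjacency X r i)\<^sup>*"
      using conn ax unfolding graph_connected_def vertices_def by auto
    then obtain S where S: "pset X r i S" "\<forall>h\<in>S. i h \<noteq> h" "\<forall>x. par r S x \<longleftrightarrow> (x = r a) \<noteq> (x = r b)"
      using walk by metis
    have pab: "pset X r i {a, b}" using aL bL legs_he legs_i unfolding pset_def by auto
    have parab: "par r {a, b} x \<longleftrightarrow> (x = r a) \<noteq> (x = r b)" for x
    proof -
      have "{k\<in>{a,b}. r k = x} = (if r a = x then {a} else {}) \<union> (if r b = x then {b} else {})" by auto
      thus ?thesis using b(2) unfolding par_def by auto
    qed
    let ?T = "sd S {a, b}"
    have pT: "pset X r i ?T" using pset_sd S pab by blast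
    have parT: "\<not> par r ?T x" for x
      unfolding par_sd[OF pset_fin[OF S(1)] pset_fin[OF pab]] S(3)[rule_format] parab by auto
    have SL: "S \<inter> graph_legs X r i = {}" using S(2) legs_i by blast
    have legT: "?T \<inter> graph_legs X r i = {a, b}" using SL aL bL unfolding sd_def by blast
    show ?thesis
    proof (intro exI conjI allI)
      show "pset X r i (sd H' ?T)" using pset_sd H'(1) pT by blast
      show "\<not> par r (sd H' ?T) x" for x
        unfolding par_sd[OF pset_fin[OF H'(1)] pset_fin[OF pT]] using H'(2) parT by auto
      show "sd H' ?T \<inter> graph_legs X r i = D"
      proof -
        have "sd H' ?T \<inter> graph_legs X r i = sd (H' \<inter> graph_legs X r i) (?T \<inter> graph_legs X r i)"
          unfolding sd_def by blast
        also have "\<dots> = sd ?D {a, b}" using H'(3) legT by simp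
        also have "\<dots> = D" unfolding sd_def using a b by blast
        finally show ?thesis .
      qed
    qed
  qed
qed


lemma orient:
  assumes "h \<in> X" "upe X r i d w {h, i h}"
  shows "(w = r h \<and> Suc (d (r (i h))) = d (r h)) \<or> (w = r (i h) \<and> Suc (d (r h)) = d (r (i h)))"
proof -
  obtain k where k: "{h, i h} = {k, i k}" "k \<in> half_edges X r" "r k = w" "Suc (d (r (i k))) = d w"
    using assms(2) unfolding upe_def by blast
  have kX: "k \<in> X" using k(2) HX by auto
  have "h = k \<or> (h = i k \<and> i h = k)" using k(1) ii[OF kX] by (metis doubleton_eq_iff)
  thus ?thesis using k by auto
qed

lemma upe_unique:
  assumes "upe X r i d v e" "upe X r i d w e"
  shows "v = w"
proof -
  obtain k where k: "e = {k, i k}" "k \<in> half_edges X r" "r k = v" "Suc (d (r (i k))) = d v"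
    using assms(1) unfolding upe_def by blast
  have kX: "k \<in> X" using k(2) HX by auto
  show ?thesis using orient[OF kX, of d w] assms(2) k by auto
qed


lemma edges_fin: "finite (graph_edges X r i)"
proof -
  have "graph_edges X r i \<subseteq> Pow X" unfolding graph_edges_def using HX iX by auto
  thus ?thesis using fin finite_subset by blast
qed

lemma tree_even:
  assumes conn: "graph_connected X r i"
    and cnt: "card (graph_edges X r i) + 1 = card (vertices X r)"
    and S: "pset X r i S" "\<forall>h\<in>S. i h \<noteq> h" "\<forall>x. \<not> par r S x"
  shows "S = {}"
proof (rule ccontr)
  assume Sne: "S \<noteq> {}"
  define A where "A = adjacency X r i"
  define V where "V = vertices X r"
  define E where "E = graph_edges X r i"
  obtain \<rho> where \<rho>: "\<rho> \<in> V" using conn unfolding graph_connected_def V_def by auto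
  define d where "d = dst A \<rho>"
  define N where "N = V - {\<rho>}"
  have reach: "\<exists>n. (\<rho>, v) \<in> A ^^ n" if "v \<in> V" for v
    using conn that \<rho> unfolding graph_connected_def A_def V_def by (metis rtrancl_power)
  have upex: "\<exists>e. e \<in> E \<and> upe X r i d v e" if v: "v \<in> N" for v
  proof -
    obtain n where n: "(\<rho>, v) \<in> A ^^ n" using reach v unfolding N_def by auto
    obtain u m where u: "(\<rho>, u) \<in> A ^^ m" "(u, v) \<in> A" "d v = Suc (d u)"
      using dst_pred[OF n] v unfolding N_def d_def by auto
    obtain h' where h': "u = r h'" "v = r (i h')" "h' \<in> half_edges X r" "i h' \<noteq> h'"
      using u(2) unfolding A_def adjacency_def by auto
    have hX: "h' \<in> X" using h' HX by auto
    let ?k = "i h'"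
    have k: "?k \<in> half_edges X r" "i ?k = h'" using he_i h'(3) ii hX by auto
    have ke: "{?k, i ?k} \<in> E" unfolding E_def graph_edges_def using k h'(4) by fastforce
    have "upe X r i d v {?k, i ?k}" unfolding upe_def using k h' u(3) by auto
    thus ?thesis using ke by blast
  qed
  define f where "f v = (SOME e. e \<in> E \<and> upe X r i d v e)" for v
  have fp: "f v \<in> E \<and> upe X r i d v (f v)" if "v \<in> N" for v
    unfolding f_def using someI_ex[OF upex[OF that]] .
  have inj: "inj_on f N"
  proof (rule inj_onI)
    fix v w assume "v \<in> N" "w \<in> N" "f v = f w"
    assume a: "v \<in> N" "w \<in> N" "f v = f w"
    have "upe X r i d v (f v)" "upe X r i d w (f v)" using fp[OF a(1)] fp[OF a(2)] a(3) by auto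
    thus "v = w" by (rule upe_unique)
  qed
  have finE: "finite E" using edges_fin unfolding E_def .
  have finV: "finite V" using fin unfolding V_def vertices_def by auto
  have cN: "card N = card E" using cnt \<rho> finV unfolding N_def E_def V_def by (simp add: card_Diff_singleton)
  have fNE: "f ` N \<subseteq> E" using fp by auto
  have fN: "f ` N = E"
    by (rule card_subset_eq[OF finE fNE]) (simp add: card_image[OF inj] cN)
  have finS: "finite S" using pset_fin S(1) .
  define M where "M = Max ((\<lambda>h. d (r h)) ` S)"
  have "M \<in> (\<lambda>h. d (r h)) ` S" unfolding M_def using finS Sne by (intro Max_in) auto
  then obtain h1 where h1: "h1 \<in> S" "d (r h1) = M" by auto
  have Mmax: "d (r h) \<le> M" if "h \<in> S" for h unfolding M_def using finS that by (intro Max_ge) auto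
  define v where "v = r h1"
  have SH: "S \<subseteq> half_edges X r" using S(1) unfolding pset_def by auto
  have claim: "{h, i h} = f v \<and> Suc (d (r (i h))) = d v" if h: "h \<in> S" "r h = v" for h
  proof -
    have hH: "h \<in> half_edges X r" using h SH by auto
    have hX: "h \<in> X" using hH HX by auto
    have "{h, i h} \<in> E" unfolding E_def graph_edges_def using hH S(2) h by blast
    then obtain w where w: "w \<in> N" "{h, i h} = f w" using fN by auto
    have up: "upe X r i d w {h, i h}" using fp[OF w(1)] w(2) by simp
    have ihS: "i h \<in> S" using S(1) h unfolding pset_def by auto
    from orient[OF hX up] show ?thesis
    proof
      assume "w = r h \<and> Suc (d (r (i h))) = d (r h)"
      thus ?thesis using w h by auto
    next
      assume "w = r (i h) \<and> Suc (d (r h)) = d (r (i h))"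
      hence "Suc M = d (r (i h))" using h h1 unfolding v_def by auto
      thus ?thesis using Mmax[OF ihS] by auto
    qed
  qed
  let ?Sv = "{h\<in>S. r h = v}"
  have "even (card ?Sv)" using S(3) unfolding par_def by auto
  moreover have "h1 \<in> ?Sv" using h1 unfolding v_def by auto
  moreover have "finite ?Sv" using finS by auto
  ultimately have "?Sv - {h1} \<noteq> {}"
  proof (intro notI)
    assume a: "even (card ?Sv)" "h1 \<in> ?Sv" "finite ?Sv" "?Sv - {h1} = {}"
    hence "?Sv = {h1}" by blast
    thus False using a(1) by simp
  qed
  then obtain h2 where h2: "h2 \<in> S" "r h2 = v" "h2 \<noteq> h1" by blast
  have c1: "{h1, i h1} = f v" "Suc (d (r (i h1))) = d v" using claim[of h1] h1 unfolding v_def by auto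
  have c2: "{h2, i h2} = f v" using claim h2 by auto
  have "h2 = i h1" using c1(1) c2 h2(3) by (metis doubleton_eq_iff)
  hence "r (i h1) = v" using h2 by simp
  thus False using c1(2) by simp
qed


lemma cyc_H:
  assumes "is_cycle X r i g C" "\<forall>v\<in>vertices X r. g v = 0"
  shows "pset X r i (C - r ` C) \<and> (\<forall>x. \<not> par r (C - r ` C) x) \<and> C = (C - r ` C) \<union> r ` (C - r ` C)
     \<and> (C - r ` C) \<inter> graph_legs X r i = C \<inter> graph_legs X r i"
proof -
  let ?H = "C - r ` C"
  have sub: "C \<subseteq> X" "r ` C \<subseteq> C" "i ` C \<subseteq> C" using assms(1) unfolding is_cycle_def is_subgraph_def by auto
  have cyc: "\<forall>v\<in>r ` C. 2 - 2 * int (g v) - int (val C r v) \<le> 0 \<and> even (val C r v)"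
    using assms(1) unfolding is_cycle_def vertices_def by auto
  have hec: "half_edges C r = ?H" unfolding half_edges_def ..
  have HH: "?H \<subseteq> half_edges X r"
  proof
    fix c assume c: "c \<in> ?H"
    have "c \<notin> r ` X"
    proof
      assume "c \<in> r ` X" then obtain x where x: "x \<in> X" "c = r x" by auto
      hence "r c = c" using rr by simp
      thus False using c by (metis Diff_iff image_eqI)
    qed
    thus "c \<in> half_edges X r" using c sub unfolding half_edges_def by auto
  qed
  have Hi: "\<forall>h\<in>?H. i h \<in> ?H"
  proof
    fix h assume h: "h \<in> ?H"
    have hX: "h \<in> X" using h sub by auto
    have "i h \<notin> r ` C"
    proof
      assume "i h \<in> r ` C" then obtain c where c: "c \<in> C" "i h = r c" by auto
      have "h = i (i h)" using ii hX by simp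
      also have "\<dots> = r c" using c ir sub by auto
      finally show False using h c by auto
    qed
    thus "i h \<in> ?H" using h sub by auto
  qed
  have par: "\<not> par r ?H x" for x
  proof (cases "x \<in> r ` C")
    case True
    hence "even (val C r x)" using cyc by blast
    thus ?thesis unfolding par_def val_def hec by simp
  next
    case False
    hence "{h \<in> ?H. r h = x} = {}" by blast
    thus ?thesis unfolding par_def by (metis card.empty even_zero)
  qed
  have CH: "C \<subseteq> ?H \<union> r ` ?H"
  proof
    fix c assume c: "c \<in> C"
    show "c \<in> ?H \<union> r ` ?H"
    proof (cases "c \<in> r ` C")
      case True
      then obtain c' where c': "c' \<in> C" "c = r c'" by auto
      have "g c = 0" using assms(2) c' sub unfolding vertices_def by auto
      hence "val C r c \<ge> 2" using cyc True by auto
      hence "{h \<in> ?H. r h = c} \<noteq> {}" unfolding val_def hec by (metis card.empty not_numeral_le_zero)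
      thus ?thesis by (auto simp: image_iff)
    qed (use c in auto)
  qed
  have "?H \<union> r ` ?H \<subseteq> C" using sub by auto
  moreover have "graph_legs X r i \<inter> r ` C = {}" using legs_he sub unfolding half_edges_def by blast
  ultimately have "C = ?H \<union> r ` ?H" "?H \<inter> graph_legs X r i = C \<inter> graph_legs X r i" using CH by blast+
  moreover have "pset X r i ?H" using HH Hi unfolding pset_def by blast
  ultimately show ?thesis using par by blast
qed

lemma H_cyc:
  assumes "pset X r i H" "\<forall>x. \<not> par r H x" "\<forall>v\<in>vertices X r. g v = 0"
  shows "is_cycle X r i g (H \<union> r ` H) \<and> (H \<union> r ` H) \<inter> graph_legs X r i = H \<inter> graph_legs X r i"
proof -
  let ?C = "H \<union> r ` H"
  have HH: "H \<subseteq> half_edges X r" and Hi: "\<forall>h\<in>H. i h \<in> H" using assms(1) unfolding pset_def by auto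
  have HX: "H \<subseteq> X" using HH HX by auto
  have rC: "r ` ?C = r ` H" using HX rr by (auto simp: image_iff)
  have disj: "H \<inter> r ` H = {}" using HH HX unfolding half_edges_def by blast
  have hec: "half_edges ?C r = H" unfolding half_edges_def rC using disj by blast
  have sg: "is_subgraph X r i ?C"
  proof -
    have "?C \<subseteq> X" using HX rX by blast
    moreover have "r ` ?C \<subseteq> ?C"
    proof
      fix y assume "y \<in> r ` ?C" then obtain h where "h \<in> H" "y = r h" using rC by auto
      thus "y \<in> ?C" by blast
    qed
    moreover have "i ` ?C \<subseteq> ?C"
    proof
      fix y assume "y \<in> i ` ?C" then obtain c where c: "c \<in> ?C" "y = i c" by auto
      show "y \<in> ?C"
      proof (cases "c \<in> H")
        case True thus ?thesis using Hi c by auto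
      next
        case False then obtain h where "h \<in> H" "c = r h" using c by auto
        hence "y = c" using c ir HX by auto
        thus ?thesis using c by simp
      qed
    qed
    ultimately show ?thesis unfolding is_subgraph_def by blast
  qed
  have vv: "2 - 2 * int (g v) - int (val ?C r v) \<le> 0 \<and> even (val ?C r v)" if v: "v \<in> vertices ?C r" for v
  proof -
    obtain h where h: "h \<in> H" "v = r h" using v rC unfolding vertices_def by auto
    have g0: "g v = 0" using assms(3) h HX unfolding vertices_def by auto
    have ev: "even (val ?C r v)" using assms(2) unfolding par_def val_def hec by auto
    have "finite H" using pset_fin assms(1) .
    hence "val ?C r v \<noteq> 0" unfolding val_def hec using h by auto
    moreover have "val ?C r v \<noteq> 1" using ev by (metis odd_one)
    ultimately have "val ?C r v \<ge> 2" by linarith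
    thus ?thesis using ev g0 by simp
  qed
  have "graph_legs X r i \<inter> r ` H = {}" using legs_he HX unfolding half_edges_def by blast
  thus ?thesis using sg vv unfolding is_cycle_def by blast
qed

end

theorem proposition5p18:
  fixes X :: "'a set" and r i :: "'a \<Rightarrow> 'a" and g :: "'a \<Rightarrow> nat" and D :: "'a set"
  assumes "is_tree X r i g"
    and "D \<subseteq> graph_legs X r i"
    and "even (card D)"
  shows "\<exists>!C. is_cycle X r i g C \<and> cycle_legs X r i C = D"
proof -
  have G: "is_graph X r i" and conn: "graph_connected X r i"
    and cnt: "card (graph_edges X r i) + 1 = card (vertices X r)"
    and g0: "\<forall>v\<in>vertices X r. g v = 0" using assms(1) unfolding is_tree_def by auto
  obtain H where H: "pset X r i H" "\<forall>x. \<not> par r H x" "H \<inter> graph_legs X r i = D"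
    using exist[OF G conn assms(2,3)] by blast
  show ?thesis
  proof (rule ex1I)
    show "is_cycle X r i g (H \<union> r ` H) \<and> cycle_legs X r i (H \<union> r ` H) = D"
      using H_cyc[OF G H(1,2) g0] H(3) unfolding cycle_legs_def by blast
  next
    fix C assume C: "is_cycle X r i g C \<and> cycle_legs X r i C = D"
    have c1: "pset X r i (C - r ` C)" "\<forall>x. \<not> par r (C - r ` C) x" "C = (C - r ` C) \<union> r ` (C - r ` C)"
      "(C - r ` C) \<inter> graph_legs X r i = D"
    proof -
      have "is_cycle X r i g C" "graph_legs X r i \<inter> C = D" using C unfolding cycle_legs_def by auto
      thus "pset X r i (C - r ` C)" "\<forall>x. \<not> par r (C - r ` C) x" "C = (C - r ` C) \<union> r ` (C - r ` C)"
      "(C - r ` C) \<inter> graph_legs X r i = D" using cyc_H[OF G, of g C] g0 by blast+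
    qed
    let ?S = "sd (C - r ` C) H"
    have pS: "pset X r i ?S" using pset_sd[OF G c1(1) H(1)] .
    have parS: "\<forall>x. \<not> par r ?S x"
      unfolding par_sd[OF pset_fin[OF G c1(1)] pset_fin[OF G H(1)]] using c1(2) H(2) by simp
    have noleg: "\<forall>h\<in>?S. i h \<noteq> h"
    proof
      fix h assume h: "h \<in> ?S"
      have "h \<in> half_edges X r" using h pS unfolding pset_def by auto
      show "i h \<noteq> h"
      proof
        assume "i h = h"
        hence "h \<in> graph_legs X r i" using \<open>h \<in> half_edges X r\<close> unfolding graph_legs_def by auto
        thus False using h c1(4) H(3) unfolding sd_def by blast
      qed
    qed
    have "?S = {}" using tree_even[OF G conn cnt pS noleg parS] .
    hence "C - r ` C = H" unfolding sd_def by blast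
    thus "C = H \<union> r ` H" using c1(3) by simp
  qed
qed

end
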